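(* Let $\Gamma=(\mathcal{G},\mathcal{I},\boldsymbol{c})$ be a nonatomic routing game with BPR-type cost functions, i.e., there is $\beta\in\mathbb{R}_+$ such that $c_e(x)=t_e+a_ex^{\beta}$ with $t_e,a_e\in\mathbb{R}_+$ for every edge $e$. Then there exists a demand-independent optimal toll (DIOT) for $\Gamma$.
   Context: A nonatomic routing game $\Gamma=(\mathcal{G},\mathcal{I},\boldsymbol{c})$ consists of a finite directed multigraph $\mathcal{G}=(\mathcal{V},\mathcal{E})$, a finite set $\mathcal{I}$ of origin-destination pairs $i$ with origin $o^i$ and destination $d^i$, and nondecreasing continuous cost functions $c_e:\mathbb{R}_+\to\mathbb{R}_+$. $\mathcal{P}^i$ is the set of simple $o^i$–$d^i$ paths. For a demand vector $\boldsymbol{\mu}\in\mathbb{R}_+^{\mathcal{I}}$, feasible flows are $\boldsymbol{f}\in\mathbb{R}_+^{\mathcal{P}}$ with $\sum_{p\in\mathcal{P}^i}f_p=\mu^i$; loads $x_e=\sum_{p\ni e}f_p$; path costs $c_p=\sum_{e\in p}c_e(x_e)$. A Wardrop equilibrium is a feasible flow where every used path of each pair $i$ has cost at most that of any other path in $\mathcal{P}^i$. The total cost is $L(\boldsymbol{f})=\sum_p f_pc_p(\boldsymbol{f})$; a system optimum minimizes $L$ over feasible flows. For a toll vector $\boldsymbol{\tau}\in\mathbb{R}^{\mathcal{E}}$ (entries may be negative), $\Gamma^{\boldsymbol{\tau}}$ has edge costs $c_e(x)+\tau_e$. $\boldsymbol{\tau}$ is a DIOT for $\Gamma$ if for every demand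 vector $\boldsymbol{\mu}\in\mathbb{R}_+^{\mathcal{I}}$ every Wardrop equilibrium of $\Gamma^{\boldsymbol{\tau}}$ with demand $\boldsymbol{\mu}$ is a system optimum of $\Gamma$ for demand $\boldsymbol{\mu}$. *)

theory Defs
  imports Complex_Main
begin

text \<open>A finite directed multigraph is given by a finite vertex set V, a finite edge set E
  (edges of an arbitrary type 'e, so parallel edges are allowed) and tail/head maps
  src, trg.\<close>

definition multigraph :: "'v set \<Rightarrow> 'e set \<Rightarrow> ('e \<Rightarrow> 'v) \<Rightarrow> ('e \<Rightarrow> 'v) \<Rightarrow> bool" where
  "multigraph V E src trg \<longleftrightarrow> finite V \<and> finite E \<and> (\<forall>e\<in>E. src e \<in> V \<and> trg e \<in> V)"

definition path_verts :: "('e \<Rightarrow> 'v) \<Rightarrow> 'v \<Rightarrow> 'e list \<Rightarrow> 'v list" where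
  "path_verts trg s p = s # map trg p"

definition simple_path :: "'e set \<Rightarrow> ('e \<Rightarrow> 'v) \<Rightarrow> ('e \<Rightarrow> 'v) \<Rightarrow> 'v \<Rightarrow> 'v \<Rightarrow> 'e list \<Rightarrow> bool" where
  "simple_path E src trg s d p \<longleftrightarrow>
     set p \<subseteq> E \<and>
     (\<forall>k < length p. src (p ! k) = path_verts trg s p ! k) \<and>
     last (path_verts trg s p) = d \<and>
     distinct (path_verts trg s p)"

definition paths :: "'e set \<Rightarrow> ('e \<Rightarrow> 'v) \<Rightarrow> ('e \<Rightarrow> 'v) \<Rightarrow> 'v \<Rightarrow> 'v \<Rightarrow> 'e list set" where
  "paths E src trg s d = {p. simple_path E src trg s d p}"

definition feasible ::
  "'e set \<Rightarrow> ('e \<Rightarrow> 'v) \<Rightarrow> ('e \<Rightarrow> 'v) \<Rightarrow> 'i set \<Rightarrow> ('i \<Rightarrow> 'v) \<Rightarrow> ('i \<Rightarrow> 'v)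
   \<Rightarrow> ('i \<Rightarrow> real) \<Rightarrow> ('i \<Rightarrow> 'e list \<Rightarrow> real) \<Rightarrow> bool" where
  "feasible E src trg I orig dest \<mu> f \<longleftrightarrow>
     (\<forall>i\<in>I. \<forall>p\<in>paths E src trg (orig i) (dest i). 0 \<le> f i p) \<and>
     (\<forall>i\<in>I. (\<Sum>p\<in>paths E src trg (orig i) (dest i). f i p) = \<mu> i)"

definition load ::
  "'e set \<Rightarrow> ('e \<Rightarrow> 'v) \<Rightarrow> ('e \<Rightarrow> 'v) \<Rightarrow> 'i set \<Rightarrow> ('i \<Rightarrow> 'v) \<Rightarrow> ('i \<Rightarrow> 'v)
   \<Rightarrow> ('i \<Rightarrow> 'e list \<Rightarrow> real) \<Rightarrow> 'e \<Rightarrow> real" where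
  "load E src trg I orig dest f e =
     (\<Sum>i\<in>I. \<Sum>p\<in>{p\<in>paths E src trg (orig i) (dest i). e \<in> set p}. f i p)"

definition path_cost ::
  "'e set \<Rightarrow> ('e \<Rightarrow> 'v) \<Rightarrow> ('e \<Rightarrow> 'v) \<Rightarrow> 'i set \<Rightarrow> ('i \<Rightarrow> 'v) \<Rightarrow> ('i \<Rightarrow> 'v)
   \<Rightarrow> ('e \<Rightarrow> real \<Rightarrow> real) \<Rightarrow> ('i \<Rightarrow> 'e list \<Rightarrow> real) \<Rightarrow> 'e list \<Rightarrow> real" where
  "path_cost E src trg I orig dest c f p =
     (\<Sum>e\<in>set p. c e (load E src trg I orig dest f e))"

definition wardrop_eq ::
  "'e set \<Rightarrow> ('e \<Rightarrow> 'v) \<Rightarrow> ('e \<Rightarrow> 'v) \<Rightarrow> 'i set \<Rightarrow> ('i \<Rightarrow> 'v) \<Rightarrow> ('i \<Rightarrow> 'v)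
   \<Rightarrow> ('e \<Rightarrow> real \<Rightarrow> real) \<Rightarrow> ('i \<Rightarrow> real) \<Rightarrow> ('i \<Rightarrow> 'e list \<Rightarrow> real) \<Rightarrow> bool" where
  "wardrop_eq E src trg I orig dest c \<mu> f \<longleftrightarrow>
     feasible E src trg I orig dest \<mu> f \<and>
     (\<forall>i\<in>I. \<forall>p\<in>paths E src trg (orig i) (dest i). 0 < f i p \<longrightarrow>
        (\<forall>q\<in>paths E src trg (orig i) (dest i).
           path_cost E src trg I orig dest c f p \<le> path_cost E src trg I orig dest c f q))"

definition total_cost ::
  "'e set \<Rightarrow> ('e \<Rightarrow> 'v) \<Rightarrow> ('e \<Rightarrow> 'v) \<Rightarrow> 'i set \<Rightarrow> ('i \<Rightarrow> 'v) \<Rightarrow> ('i \<Rightarrow> 'v)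
   \<Rightarrow> ('e \<Rightarrow> real \<Rightarrow> real) \<Rightarrow> ('i \<Rightarrow> 'e list \<Rightarrow> real) \<Rightarrow> real" where
  "total_cost E src trg I orig dest c f =
     (\<Sum>i\<in>I. \<Sum>p\<in>paths E src trg (orig i) (dest i).
        f i p * path_cost E src trg I orig dest c f p)"

definition system_optimum ::
  "'e set \<Rightarrow> ('e \<Rightarrow> 'v) \<Rightarrow> ('e \<Rightarrow> 'v) \<Rightarrow> 'i set \<Rightarrow> ('i \<Rightarrow> 'v) \<Rightarrow> ('i \<Rightarrow> 'v)
   \<Rightarrow> ('e \<Rightarrow> real \<Rightarrow> real) \<Rightarrow> ('i \<Rightarrow> real) \<Rightarrow> ('i \<Rightarrow> 'e list \<Rightarrow> real) \<Rightarrow> bool" where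
  "system_optimum E src trg I orig dest c \<mu> f \<longleftrightarrow>
     feasible E src trg I orig dest \<mu> f \<and>
     (\<forall>g. feasible E src trg I orig dest \<mu> g \<longrightarrow>
        total_cost E src trg I orig dest c f \<le> total_cost E src trg I orig dest c g)"

definition is_DIOT ::
  "'e set \<Rightarrow> ('e \<Rightarrow> 'v) \<Rightarrow> ('e \<Rightarrow> 'v) \<Rightarrow> 'i set \<Rightarrow> ('i \<Rightarrow> 'v) \<Rightarrow> ('i \<Rightarrow> 'v)
   \<Rightarrow> ('e \<Rightarrow> real \<Rightarrow> real) \<Rightarrow> ('e \<Rightarrow> real) \<Rightarrow> bool" where
  "is_DIOT E src trg I orig dest c \<tau> \<longleftrightarrow>
     (\<forall>\<mu>. (\<forall>i\<in>I. 0 \<le> \<mu> i) \<longrightarrow>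
        (\<forall>f. wardrop_eq E src trg I orig dest (\<lambda>e x. c e x + \<tau> e) \<mu> f \<longrightarrow>
             system_optimum E src trg I orig dest c \<mu> f))"

text \<open>x^beta for x \<ge> 0, with the convention x^0 = 1 (also at x = 0).\<close>

definition rpow :: "real \<Rightarrow> real \<Rightarrow> real" where
  "rpow x \<beta> = (if \<beta> = 0 then 1 else x powr \<beta>)"

definition bpr_cost :: "('e \<Rightarrow> real) \<Rightarrow> ('e \<Rightarrow> real) \<Rightarrow> real \<Rightarrow> 'e \<Rightarrow> real \<Rightarrow> real" where
  "bpr_cost t a \<beta> e x = t e + a e * rpow x \<beta>"

end

theory Submission
  imports Defs "HOL-Analysis.Analysis"
begin

lemma key_ineq:
  fixes x y b :: real
  assumes "0 \<le> x" "0 \<le> y" "0 \<le> b"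
  shows "(b+1) * rpow x b * y - b * (x * rpow x b) \<le> y * rpow y b"
proof (cases "b = 0")
  case True then show ?thesis by (simp add: rpow_def)
next
  case False
  hence b: "b > 0" using assms by simp
  show ?thesis
  proof (cases "x = 0 \<or> y = 0")
    case True
    then show ?thesis using b assms by (auto simp: rpow_def)
  next
    case False
    hence xy: "x > 0" "y > 0" using assms by auto
    have Y: "(x powr (b+1)) powr (b/(b+1)) * (y powr (b+1)) powr (1/(b+1))
       \<le> (b/(b+1)) * x powr (b+1) + (1/(b+1)) * y powr (b+1)"
      by (rule Youngs_inequality_0) (use b xy in \<open>auto simp: field_simps\<close>)
    have e1: "(x powr (b+1)) powr (b/(b+1)) = x powr b"
      using b by (simp add: powr_powr)
    have e2: "(y powr (b+1)) powr (1/(b+1)) = y"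
      using b xy by (simp add: powr_powr)
    have e3: "x powr (b+1) = x * x powr b" "y powr (b+1) = y * y powr b"
      using xy by (simp_all add: powr_add)
    have "x powr b * y \<le> (b/(b+1)) * (x * x powr b) + (1/(b+1)) * (y * y powr b)"
      using Y e1 e2 e3 by simp
    hence "(b+1) * (x powr b * y) \<le> (b+1) * ((b/(b+1)) * (x * x powr b) + (1/(b+1)) * (y * y powr b))"
      using b by (intro mult_left_mono) auto
    also have "\<dots> = ((b+1) * (b/(b+1))) * (x * x powr b) + ((b+1) * (1/(b+1))) * (y * y powr b)"
      by (simp only: distrib_left mult.assoc)
    also have "\<dots> = b * (x * x powr b) + y * y powr b"
    proof -
      have "(b+1) * (b/(b+1)) = b" "(b+1) * (1/(b+1)) = 1" using b by auto
      thus ?thesis by simp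
    qed
    finally show ?thesis using b by (simp add: rpow_def algebra_simps)
  qed
qed

lemma exchange:
  fixes f :: "'i \<Rightarrow> 'e list \<Rightarrow> real" and w :: "'e \<Rightarrow> real"
  assumes "finite I" "finite E" "\<And>i. i\<in>I \<Longrightarrow> finite (P i)"
    "\<And>i p. i\<in>I \<Longrightarrow> p \<in> P i \<Longrightarrow> set p \<subseteq> E"
  shows "(\<Sum>i\<in>I. \<Sum>p\<in>P i. f i p * (\<Sum>e\<in>set p. w e))
       = (\<Sum>e\<in>E. w e * (\<Sum>i\<in>I. \<Sum>p\<in>{p\<in>P i. e\<in>set p}. f i p))"
proof -
  have "(\<Sum>i\<in>I. \<Sum>p\<in>P i. f i p * (\<Sum>e\<in>set p. w e))
      = (\<Sum>i\<in>I. \<Sum>p\<in>P i. \<Sum>e\<in>E. (if e \<in> set p then f i p * w e else 0))"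
  proof (intro sum.cong refl)
    fix i p assume "i \<in> I" "p \<in> P i"
    hence "set p = E \<inter> set p" using assms(4) by blast
    hence "(\<Sum>e\<in>set p. w e) = (\<Sum>e\<in>E. if e \<in> set p then w e else 0)"
      using sum.inter_restrict[OF assms(2), of w "set p"] by simp
    thus "f i p * (\<Sum>e\<in>set p. w e) = (\<Sum>e\<in>E. (if e \<in> set p then f i p * w e else 0))"
      by (simp add: sum_distrib_left if_distrib cong: if_cong)
  qed
  also have "\<dots> = (\<Sum>e\<in>E. \<Sum>i\<in>I. \<Sum>p\<in>P i. (if e \<in> set p then f i p * w e else 0))"
    by (subst sum.swap) (simp add: sum.swap[of _ E])
  also have "\<dots> = (\<Sum>e\<in>E. w e * (\<Sum>i\<in>I. \<Sum>p\<in>{p\<in>P i. e\<in>set p}. f i p))"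
    using assms(3) by (simp add: sum_distrib_left sum.inter_filter if_distrib mult.commute cong: if_cong)
  finally show ?thesis .
qed

lemma finite_paths:
  assumes "finite E"
  shows "finite (paths E src trg s d)"
proof -
  have "paths E src trg s d \<subseteq> {xs. set xs \<subseteq> E \<and> length xs \<le> card E}"
  proof
    fix p assume "p \<in> paths E src trg s d"
    hence sp: "set p \<subseteq> E" "distinct (map trg p)"
      unfolding paths_def Defs.simple_path_def path_verts_def by auto
    hence "distinct p" by (simp add: distinct_map)
    hence "length p = card (set p)" by (simp add: distinct_card)
    also have "\<dots> \<le> card E" by (rule card_mono[OF assms sp(1)])
    finally show "p \<in> {xs. set xs \<subseteq> E \<and> length xs \<le> card E}" using sp by simp
  qed
  thus ?thesis using finite_lists_length_le[OF assms] finite_subset by blast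
qed

theorem corollary3:
  fixes V :: "'v set" and E :: "'e set" and src trg :: "'e \<Rightarrow> 'v"
    and I :: "'i set" and orig dest :: "'i \<Rightarrow> 'v"
    and t a :: "'e \<Rightarrow> real" and \<beta> :: real
  assumes "multigraph V E src trg"
    and "finite I"
    and "\<forall>i\<in>I. orig i \<in> V \<and> dest i \<in> V"
    and "0 \<le> \<beta>"
    and "\<forall>e\<in>E. 0 \<le> t e \<and> 0 \<le> a e"
  shows "\<exists>\<tau> :: 'e \<Rightarrow> real. is_DIOT E src trg I orig dest (bpr_cost t a \<beta>) \<tau>"
proof -
  have finE: "finite E" using assms(1) by (simp add: multigraph_def)
  define P where "P = (\<lambda>i. paths E src trg (orig i) (dest i))"
  have finP: "\<And>i. finite (P i)" unfolding P_def by (rule finite_paths[OF finE])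
  have PE: "\<And>i p. p \<in> P i \<Longrightarrow> set p \<subseteq> E"
    unfolding P_def paths_def Defs.simple_path_def by auto
  define c where "c = bpr_cost t a \<beta>"
  define \<tau> where "\<tau> = (\<lambda>e. - \<beta> * t e / (\<beta> + 1))"
  have b1: "\<beta> + 1 > 0" using assms(4) by simp
  have "is_DIOT E src trg I orig dest c \<tau>"
    unfolding is_DIOT_def
  proof (intro allI impI)
    fix \<mu> :: "'i \<Rightarrow> real" and f :: "'i \<Rightarrow> 'e list \<Rightarrow> real"
    assume wd: "wardrop_eq E src trg I orig dest (\<lambda>e x. c e x + \<tau> e) \<mu> f"
    have feasf: "feasible E src trg I orig dest \<mu> f" using wd by (simp add: wardrop_eq_def)
    show "system_optimum E src trg I orig dest c \<mu> f"
      unfolding system_optimum_def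
    proof (intro conjI allI impI feasf)
      fix g assume feasg: "feasible E src trg I orig dest \<mu> g"
      define x where "x = load E src trg I orig dest f"
      define y where "y = load E src trg I orig dest g"
      have fnn: "\<And>i p. i \<in> I \<Longrightarrow> p \<in> P i \<Longrightarrow> 0 \<le> f i p"
        using feasf by (simp add: feasible_def P_def)
      have gnn: "\<And>i p. i \<in> I \<Longrightarrow> p \<in> P i \<Longrightarrow> 0 \<le> g i p"
        using feasg by (simp add: feasible_def P_def)
      have fsum: "\<And>i. i \<in> I \<Longrightarrow> (\<Sum>p\<in>P i. f i p) = \<mu> i"
        using feasf by (simp add: feasible_def P_def)
      have gsum: "\<And>i. i \<in> I \<Longrightarrow> (\<Sum>p\<in>P i. g i p) = \<mu> i"
        using feasg by (simp add: feasible_def P_def)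
      have xnn: "\<And>e. 0 \<le> x e"
        unfolding x_def load_def using fnn by (auto intro!: sum_nonneg simp: P_def)
      have ynn: "\<And>e. 0 \<le> y e"
        unfolding y_def load_def using gnn by (auto intro!: sum_nonneg simp: P_def)
      define m where "m = (\<lambda>e. t e + (\<beta>+1) * a e * rpow (x e) \<beta>)"
      define M where "M = (\<lambda>p. \<Sum>e\<in>set p. m e)"
      have ex: "\<And>h w. (\<Sum>i\<in>I. \<Sum>p\<in>P i. h i p * (\<Sum>e\<in>set p. w e))
         = (\<Sum>e\<in>E. w e * load E src trg I orig dest h e)"
        unfolding load_def P_def
        by (rule exchange[OF assms(2) finE]) (use finP PE in \<open>auto simp: P_def\<close>)
      have TCf: "total_cost E src trg I orig dest c f = (\<Sum>e\<in>E. c e (x e) * x e)"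
        using ex[of f "\<lambda>e. c e (x e)"] unfolding total_cost_def path_cost_def x_def P_def .
      have TCg: "total_cost E src trg I orig dest c g = (\<Sum>e\<in>E. c e (y e) * y e)"
        using ex[of g "\<lambda>e. c e (y e)"] unfolding total_cost_def path_cost_def y_def P_def .
      have Mf: "(\<Sum>i\<in>I. \<Sum>p\<in>P i. f i p * M p) = (\<Sum>e\<in>E. m e * x e)"
        using ex[of f m] unfolding M_def x_def .
      have Mg: "(\<Sum>i\<in>I. \<Sum>p\<in>P i. g i p * M p) = (\<Sum>e\<in>E. m e * y e)"
        using ex[of g m] unfolding M_def y_def .
      have edge: "m e * (y e - x e) \<le> c e (y e) * y e - c e (x e) * x e" if "e \<in> E" for e
      proof -
        have ta: "0 \<le> t e" "0 \<le> a e" using assms(5) that by auto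
        have k: "(\<beta>+1) * rpow (x e) \<beta> * y e - \<beta> * (x e * rpow (x e) \<beta>) \<le> y e * rpow (y e) \<beta>"
          by (rule key_ineq[OF xnn ynn assms(4)])
        have "a e * ((\<beta>+1) * rpow (x e) \<beta> * y e - \<beta> * (x e * rpow (x e) \<beta>)) \<le> a e * (y e * rpow (y e) \<beta>)"
          by (rule mult_left_mono[OF k ta(2)])
        thus ?thesis unfolding m_def c_def bpr_cost_def by (simp add: algebra_simps)
      qed
      have Mnn: "\<And>i p. p \<in> P i \<Longrightarrow> 0 \<le> M p"
      proof -
        fix i p assume "p \<in> P i"
        hence "set p \<subseteq> E" by (rule PE)
        thus "0 \<le> M p" unfolding M_def m_def using assms(5) assms(4) xnn b1
          by (intro sum_nonneg) (auto simp: rpow_def intro!: add_nonneg_nonneg mult_nonneg_nonneg)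
      qed
      have MPC: "M p = (\<beta>+1) * path_cost E src trg I orig dest (\<lambda>e x. c e x + \<tau> e) f p" for p
        unfolding M_def path_cost_def sum_distrib_left x_def[symmetric]
      proof (rule sum.cong[OF refl])
        fix e show "m e = (\<beta> + 1) * (c e (x e) + \<tau> e)"
          unfolding m_def c_def \<tau>_def bpr_cost_def using b1 by (simp add: field_simps)
      qed
      have eqM: "M p \<le> M q" if "i \<in> I" "p \<in> P i" "0 < f i p" "q \<in> P i" for i p q
      proof -
        have "path_cost E src trg I orig dest (\<lambda>e x. c e x + \<tau> e) f p
            \<le> path_cost E src trg I orig dest (\<lambda>e x. c e x + \<tau> e) f q"
          using wd that unfolding wardrop_eq_def P_def by blast
        thus ?thesis unfolding MPC using b1 by simp
      qed
      have perI: "(\<Sum>p\<in>P i. f i p * M p) \<le> (\<Sum>p\<in>P i. g i p * M p)" if iI: "i \<in> I" for i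
      proof (cases "\<exists>p0\<in>P i. 0 < f i p0")
        case True
        then obtain p0 where p0: "p0 \<in> P i" "0 < f i p0" by blast
        have "(\<Sum>p\<in>P i. f i p * M p) = (\<Sum>p\<in>P i. f i p * M p0)"
        proof (rule sum.cong[OF refl])
          fix p assume p: "p \<in> P i"
          show "f i p * M p = f i p * M p0"
          proof (cases "0 < f i p")
            case True
            have "M p \<le> M p0" by (rule eqM[OF iI p True p0(1)])
            moreover have "M p0 \<le> M p" by (rule eqM[OF iI p0 p])
            ultimately show ?thesis by simp
          next
            case False
            hence "f i p = 0" using fnn[OF iI p] by simp
            thus ?thesis by simp
          qed
        qed
        also have "\<dots> = \<mu> i * M p0" using fsum[OF iI] by (simp add: sum_distrib_right[symmetric])
        also have "\<dots> = (\<Sum>p\<in>P i. g i p * M p0)" using gsum[OF iI] by (simp add: sum_distrib_right[symmetric])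
        also have "\<dots> \<le> (\<Sum>p\<in>P i. g i p * M p)"
          by (rule sum_mono) (use gnn[OF iI] eqM[OF iI p0] in \<open>auto intro: mult_left_mono\<close>)
        finally show ?thesis .
      next
        case False
        hence "\<And>p. p \<in> P i \<Longrightarrow> f i p = 0" using fnn[OF iI] by force
        hence "(\<Sum>p\<in>P i. f i p * M p) = 0" by simp
        also have "\<dots> \<le> (\<Sum>p\<in>P i. g i p * M p)"
          using gnn[OF iI] Mnn by (auto intro!: sum_nonneg)
        finally show ?thesis .
      qed
      have "(\<Sum>e\<in>E. m e * x e) \<le> (\<Sum>e\<in>E. m e * y e)"
        unfolding Mf[symmetric] Mg[symmetric] by (rule sum_mono[OF perI])
      hence "0 \<le> (\<Sum>e\<in>E. m e * (y e - x e))"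
        by (simp add: right_diff_distrib sum_subtractf)
      also have "\<dots> \<le> (\<Sum>e\<in>E. c e (y e) * y e - c e (x e) * x e)"
        by (rule sum_mono[OF edge])
      finally show "total_cost E src trg I orig dest c f \<le> total_cost E src trg I orig dest c g"
        unfolding TCf TCg by (simp add: sum_subtractf)
    qed
  qed
  thus ?thesis unfolding c_def by blast
qed

end
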